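(* Let $\psi$ be a finite conjunction of linear constraints, each of the form $\left(\sum_i d_i x_i\right)\odot n$ with integers $d_i,n$, database objects $x_i$, and $\odot\in\{=,<,\le\}$, and let $D$ be a database satisfying $\psi$. For each site $k\in\{1,\dots,K\}$ form the local treaty template $\varphi_{\Gamma_k}$ by replacing each clause $\left(\sum_i d_i x_i\right)\odot n$ of $\psi$ by $\left(\sum_{\mathit{Loc}(x_i)=k} d_i x_i + c\right)\odot n$, where $c$ is a fresh integer-valued configuration variable (distinct for each clause and each site). Then there exists an assignment of integer values to all configuration variables such that the resulting formulas $\varphi_{\Gamma_1},\dots,\varphi_{\Gamma_K}$ (which mention only objects located at the respective site) satisfy: (H1) for every database $D'$, $\bigwedge_{1\le k\le K}\varphi_{\Gamma_k}(D')$ implies $\psi(D')$; and (H2) $\varphi_{\Gamma_k}(D)$ holds for every $k=1,\dots,K$.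
   Context: A database is a map from a countably infinite set of objects to the integers with finite support; objects are assigned to sites $\{1,\dots,K\}$ by $\mathit{Loc}$, each object residing at exactly one site. A formula is evaluated on a database by substituting each object's value for the object. *)

theory Defs
  imports Main "HOL-Library.Countable"
begin

datatype cmp = CEq | CLt | CLe

fun cmp_holds :: "cmp \<Rightarrow> int \<Rightarrow> int \<Rightarrow> bool" where
  "cmp_holds CEq a b = (a = b)"
| "cmp_holds CLt a b = (a < b)"
| "cmp_holds CLe a b = (a \<le> b)"

datatype 'obj lin_constraint = LinC "(int \<times> 'obj) list" cmp int

definition is_database :: "('obj \<Rightarrow> int) \<Rightarrow> bool" where
  "is_database D \<longleftrightarrow> finite {x. D x \<noteq> 0}"

fun lin_sum :: "('obj \<Rightarrow> int) \<Rightarrow> (int \<times> 'obj) list \<Rightarrow> int" where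
  "lin_sum D ts = sum_list (map (\<lambda>(d, x). d * D x) ts)"

fun holds_constraint :: "('obj \<Rightarrow> int) \<Rightarrow> 'obj lin_constraint \<Rightarrow> bool" where
  "holds_constraint D (LinC ts op n) = cmp_holds op (lin_sum D ts) n"

definition holds_conj :: "('obj \<Rightarrow> int) \<Rightarrow> 'obj lin_constraint list \<Rightarrow> bool" where
  "holds_conj D psi \<longleftrightarrow> (\<forall>c \<in> set psi. holds_constraint D c)"

text \<open>Local treaty template for site k, instantiated with configuration values
  conf j k for clause j (index in psi) at site k:
  clause j becomes (sum over terms with Loc x_i = k of d_i x_i + conf j k) op n.\<close>
definition local_treaty ::
  "('obj \<Rightarrow> nat) \<Rightarrow> 'obj lin_constraint list \<Rightarrow> (nat \<Rightarrow> nat \<Rightarrow> int) \<Rightarrow> nat \<Rightarrow> ('obj \<Rightarrow> int) \<Rightarrow> bool" where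
  "local_treaty Loc psi conf k D \<longleftrightarrow>
     (\<forall>j < length psi. case psi ! j of LinC ts op n \<Rightarrow>
        cmp_holds op (lin_sum D (filter (\<lambda>(d, x). Loc x = k) ts) + conf j k) n)"

end

theory Submission
  imports Defs
begin

lemma lin_sum_cons: "lin_sum D ((d,x)#ts) = d * D x + lin_sum D ts"
  by simp

lemma decomp:
  assumes "finite A" "\<forall>x. Loc x \<in> A"
  shows "lin_sum D ts = (\<Sum>k\<in>A. lin_sum D (filter (\<lambda>(d, x). Loc x = k) ts))"
proof (induction ts)
  case Nil then show ?case by simp
next
  case (Cons a ts)
  obtain d x where a: "a = (d,x)" by (cases a)
  have "(\<Sum>k\<in>A. lin_sum D (filter (\<lambda>(d, x). Loc x = k) (a#ts)))
      = (\<Sum>k\<in>A. (if Loc x = k then d * D x else 0) + lin_sum D (filter (\<lambda>(d, x). Loc x = k) ts))"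
    by (rule sum.cong) (auto simp: a)
  also have "\<dots> = d * D x + lin_sum D ts"
    using assms Cons by (simp add: sum.distrib sum.delta)
  finally show ?case by (simp add: a)
qed

theorem theorem4p2:
  fixes Loc :: "'obj::countable \<Rightarrow> nat"
    and K :: nat
    and psi :: "'obj lin_constraint list"
    and D :: "'obj \<Rightarrow> int"
  assumes "infinite (UNIV :: 'obj set)"
    and "\<forall>x. Loc x \<in> {1..K}"
    and "is_database D"
    and "holds_conj D psi"
  shows "\<exists>conf :: nat \<Rightarrow> nat \<Rightarrow> int.
           (\<forall>D'. is_database D' \<longrightarrow>
                 (\<forall>k \<in> {1..K}. local_treaty Loc psi conf k D') \<longrightarrow> holds_conj D' psi)
         \<and> (\<forall>k \<in> {1..K}. local_treaty Loc psi conf k D)"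
proof -
  define L where "L = (\<lambda>E k ts. lin_sum E (filter (\<lambda>(d::int, x). Loc x = k) ts))"
  define conf where "conf = (\<lambda>j k. case psi ! j of LinC ts op n \<Rightarrow>
     if k = 1 then lin_sum D ts - L D 1 ts else if op = CLt then n - 1 - L D k ts else n - L D k ts)"
  have K1: "1 \<le> K" using assms(2) by (meson atLeastAtMost_iff le_trans)
  have dec: "\<And>E ts. lin_sum E ts = L E 1 ts + (\<Sum>k\<in>{2..K}. L E k ts)"
  proof -
    fix E ts
    have "{1..K} = insert 1 {2..K}" using K1 by auto
    then show "lin_sum E ts = L E 1 ts + (\<Sum>k\<in>{2..K}. L E k ts)"
      using decomp[of "{1..K}" Loc E ts] assms(2) unfolding L_def by simp
  qed
  have H1: "holds_conj D' psi" if tr: "\<forall>k \<in> {1..K}. local_treaty Loc psi conf k D'" for D'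
    unfolding holds_conj_def
  proof
    fix c assume "c \<in> set psi"
    then obtain j where j: "j < length psi" "psi ! j = c" by (meson in_set_conv_nth)
    obtain ts op n where c: "c = LinC ts op n" by (cases c)
    have Sc: "cmp_holds op (lin_sum D ts) n" using assms(4) \<open>c \<in> set psi\<close> c
      unfolding holds_conj_def by fastforce
    have loc: "\<And>k. k \<in> {1..K} \<Longrightarrow> cmp_holds op (L D' k ts + conf j k) n"
      using tr j c unfolding local_treaty_def L_def by fastforce
    have l1: "cmp_holds op (L D' 1 ts + lin_sum D ts - L D 1 ts) n"
      using loc[of 1] K1 j c by (simp add: conf_def add_diff_eq)
    have lk: "\<And>k. k \<in> {2..K} \<Longrightarrow> cmp_holds op (L D' k ts + (if op = CLt then n - 1 - L D k ts else n - L D k ts)) n"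
    proof -
      fix k assume k: "k \<in> {2..K}"
      then have "k \<in> {1..K}" "k \<noteq> 1" by auto
      then show "?thesis k" using loc[of k] j c by (simp add: conf_def)
    qed
    have dD: "lin_sum D ts = L D 1 ts + (\<Sum>k\<in>{2..K}. L D k ts)" by (rule dec)
    have dD': "lin_sum D' ts = L D' 1 ts + (\<Sum>k\<in>{2..K}. L D' k ts)" by (rule dec)
    show "holds_constraint D' c"
    proof (cases op)
      case CEq
      have "(\<Sum>k\<in>{2..K}. L D' k ts) = (\<Sum>k\<in>{2..K}. L D k ts)"
        by (rule sum.cong) (use lk CEq in auto)
      then show ?thesis using l1 Sc CEq c dD dD' by simp
    next
      case CLt
      have "(\<Sum>k\<in>{2..K}. L D' k ts) \<le> (\<Sum>k\<in>{2..K}. L D k ts)"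
        by (rule sum_mono) (use lk CLt in fastforce)
      then show ?thesis using l1 Sc CLt c dD dD' by simp
    next
      case CLe
      have "(\<Sum>k\<in>{2..K}. L D' k ts) \<le> (\<Sum>k\<in>{2..K}. L D k ts)"
        by (rule sum_mono) (use lk CLe in fastforce)
      then show ?thesis using l1 Sc CLe c dD dD' by simp
    qed
  qed
  have H2: "local_treaty Loc psi conf k D" if "k \<in> {1..K}" for k
    unfolding local_treaty_def
  proof (intro allI impI)
    fix j assume j: "j < length psi"
    obtain ts op n where c: "psi ! j = LinC ts op n" by (cases "psi ! j")
    have Sc: "cmp_holds op (lin_sum D ts) n" using assms(4) j c
      unfolding holds_conj_def by (metis holds_constraint.simps nth_mem)
    show "case psi ! j of LinC ts op n \<Rightarrow>
        cmp_holds op (lin_sum D (filter (\<lambda>(d, x). Loc x = k) ts) + conf j k) n"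
      using Sc c by (cases op) (auto simp: conf_def L_def)
  qed
  show ?thesis using H1 H2 by blast
qed

end
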